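(* Let $m,K$ be positive integers and $b_1,\dots,b_{3m}$ positive integers with $K/4<b_i<K/2$ and $\sum_i b_i=mK$. Set $W=100(5m)^2K$, $a_i=b_i+W$, $L=3W+K$, $\epsilon=1/(400(5m)^2)$, $h=\lfloor 4\epsilon L\rfloor$, $H=L+h$, $\beta_0=h/H$, $\beta_i=a_i/H-1/3$ ($1\le i\le 3m$). Let $X$ be the multiset consisting of $a_1,\dots,a_{3m}$, $m$ copies of $-H$ and $m$ copies of $h$, and let $T_{\min}$ be a minimum-cost addition tree over $X$. Then in $T_{\min}$, if two sibling nodes are such that one of them is a type-0 node, the other is also a type-0 node.
   Context: An addition tree over a multiset $X$ is a full binary tree whose leaves are labeled by the elements of $X$ (each used once), each internal node having value equal to the sum of its children's values; its cost is the sum of the absolute values of its internal nodes, and $T_{\min}$ minimizes the cost. A "$\lambda$" denotes a sum of at most $5m$ numbers each of the form $\pm\beta_i$ with $0\le i\le 3m$. Every node value of an addition tree over $X$ can be written as $(N/3+\lambda)H$ with $N$ an integer and $\lambda$ such a sum; since $|\lambda|\le 5m\cdot 4\epsilon=1/(500m)$, the integer $N$ and the real number $\lambda$ are uniquely determined. A node is type-0 if its value is of the form $\lambda H$, i.e. $N=0$. *)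

theory Defs
  imports Main "HOL-Library.Multiset" Complex_Main
begin

datatype atree = Leaf real | Node atree atree

fun leaves :: "atree \<Rightarrow> real multiset" where
  "leaves (Leaf x) = {#x#}"
| "leaves (Node l r) = leaves l + leaves r"

fun tval :: "atree \<Rightarrow> real" where
  "tval (Leaf x) = x"
| "tval (Node l r) = tval l + tval r"

fun cost :: "atree \<Rightarrow> real" where
  "cost (Leaf x) = 0"
| "cost (Node l r) = \<bar>tval l + tval r\<bar> + cost l + cost r"

fun subtrees :: "atree \<Rightarrow> atree set" where
  "subtrees (Leaf x) = {Leaf x}"
| "subtrees (Node l r) = insert (Node l r) (subtrees l \<union> subtrees r)"

definition min_cost_tree :: "real multiset \<Rightarrow> atree \<Rightarrow> bool" where
  "min_cost_tree X T \<longleftrightarrow> leaves T = X \<and> (\<forall>T'. leaves T' = X \<longrightarrow> cost T \<le> cost T')"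

text \<open>A term is encoded as (sign, index), sign True meaning +.\<close>
definition is_type0 :: "nat \<Rightarrow> (nat \<Rightarrow> real) \<Rightarrow> real \<Rightarrow> real \<Rightarrow> bool" where
  "is_type0 m beta H v \<longleftrightarrow>
     (\<exists>cs :: (bool \<times> nat) list. length cs \<le> 5 * m \<and> (\<forall>p\<in>set cs. snd p \<le> 3 * m) \<and>
        v = sum_list (map (\<lambda>(s, i). if s then beta i else - beta i) cs) * H)"

end

theory Submission
  imports Defs
begin

fun inodes :: "atree \<Rightarrow> nat" where
  "inodes (Leaf x) = 0"
| "inodes (Node l r) = Suc (inodes l + inodes r)"

lemma size_leaves: "size (leaves T) = inodes T + 1"
  by (induction T) auto

lemma tval_sum: "tval T = sum_mset (leaves T)"
  by (induction T) auto

lemma sub_leaves: "S \<in> subtrees T \<Longrightarrow> leaves S \<subseteq># leaves T"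
proof (induction T)
  case (Leaf x) then show ?case by simp
next
  case (Node A B)
  then show ?case
    by (auto intro: subset_mset.order_trans[OF _ mset_subset_eq_add_left]
                    subset_mset.order_trans[OF _ mset_subset_eq_add_right])
qed

lemma surgery:
  "Node l r \<in> subtrees T \<or> Node r l \<in> subtrees T \<Longrightarrow>
   \<exists>T'. leaves T' + leaves l = leaves T \<and> tval T' + tval l = tval T \<and>
        cost T' + cost l \<le> cost T - \<bar>tval l + tval r\<bar> + \<bar>tval l\<bar> * inodes T"
proof (induction T)
  case (Leaf x) then show ?case by auto
next
  case (Node A B)
  show ?case
  proof (cases "Node A B = Node l r \<or> Node A B = Node r l")
    case True
    then show ?thesis
    proof
      assume e: "Node A B = Node l r"
      show ?thesis
        by (rule exI[of _ r]) (use e in \<open>auto simp: add.commute\<close>)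
    next
      assume e: "Node A B = Node r l"
      show ?thesis
        by (rule exI[of _ r]) (use e in \<open>auto simp: add.commute\<close>)
    qed
  next
    case False
    then have "(Node l r \<in> subtrees A \<or> Node r l \<in> subtrees A) \<or>
               (Node l r \<in> subtrees B \<or> Node r l \<in> subtrees B)"
      using Node.prems by auto
    then show ?thesis
    proof
      assume hA: "Node l r \<in> subtrees A \<or> Node r l \<in> subtrees A"
      obtain A' where A': "leaves A' + leaves l = leaves A" "tval A' + tval l = tval A"
        "cost A' + cost l \<le> cost A - \<bar>tval l + tval r\<bar> + \<bar>tval l\<bar> * inodes A"
        using Node.IH(1)[OF hA] by blast
      have c: "\<bar>tval A' + tval B\<bar> \<le> \<bar>tval A + tval B\<bar> + \<bar>tval l\<bar>"
        using A'(2) by linarith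
      have nn: "0 \<le> \<bar>tval l\<bar> * real (inodes B)" by simp
      show ?thesis
        apply (intro exI[of _ "Node A' B"])
        using A' c nn apply (simp add: algebra_simps)
        using A' c nn by linarith
    next
      assume hB: "Node l r \<in> subtrees B \<or> Node r l \<in> subtrees B"
      obtain B' where B': "leaves B' + leaves l = leaves B" "tval B' + tval l = tval B"
        "cost B' + cost l \<le> cost B - \<bar>tval l + tval r\<bar> + \<bar>tval l\<bar> * inodes B"
        using Node.IH(2)[OF hB] by blast
      have c: "\<bar>tval A + tval B'\<bar> \<le> \<bar>tval A + tval B\<bar> + \<bar>tval l\<bar>"
        using B'(2) by linarith
      have nn: "0 \<le> \<bar>tval l\<bar> * real (inodes A)" by simp
      show ?thesis
        apply (intro exI[of _ "Node A B'"])
        using B' c nn apply (simp add: algebra_simps)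
        using B' c nn by linarith
    qed
  qed
qed

definition lam :: "(nat \<Rightarrow> real) \<Rightarrow> (bool \<times> nat) list \<Rightarrow> real" where
  "lam beta cs = sum_list (map (\<lambda>(s, i). if s then beta i else - beta i) cs)"

lemma lam_append: "lam beta (xs @ ys) = lam beta xs + lam beta ys"
  by (simp add: lam_def)

lemma lam_bound:
  fixes B :: real
  assumes "\<forall>p\<in>set cs. \<bar>beta (snd p)\<bar> \<le> B"
  shows "\<bar>lam beta cs\<bar> \<le> real (length cs) * B"
  using assms
proof (induction cs)
  case Nil then show ?case by (simp add: lam_def)
next
  case (Cons p cs)
  have "lam beta (p # cs) = (if fst p then beta (snd p) else - beta (snd p)) + lam beta cs"
    by (cases p) (simp add: lam_def)
  moreover have "\<bar>if fst p then beta (snd p) else - beta (snd p)\<bar> \<le> B"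
    using Cons.prems by auto
  ultimately show ?case using Cons by (auto simp: algebra_simps)
qed

lemma repr:
  assumes atoms: "\<forall>x\<in>#X. \<exists>n::int. \<exists>cs. length cs \<le> 1 \<and> (\<forall>p\<in>set cs. snd p \<le> M) \<and>
                        x = (n / 3 + lam beta cs) * H"
  shows "S \<subseteq># X \<Longrightarrow> \<exists>N::int. \<exists>cs. length cs \<le> size S \<and> (\<forall>p\<in>set cs. snd p \<le> M) \<and>
                        sum_mset S = (N / 3 + lam beta cs) * H"
proof (induction S)
  case empty
  show ?case by (rule exI[of _ 0], rule exI[of _ "[]"]) (simp add: lam_def)
next
  case (add x S)
  have "S \<subseteq># X" using add.prems
    by (meson mset_subset_eq_insertD subset_mset.dual_order.strict_implies_order)
  then obtain N :: int and cs where h: "length cs \<le> size S" "\<forall>p\<in>set cs. snd p \<le> M"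
      "sum_mset S = (N / 3 + lam beta cs) * H" using add.IH by blast
  have "x \<in># X" using add.prems by (simp add: insert_subset_eq_iff)
  then obtain n :: int and ds where d: "length ds \<le> 1" "\<forall>p\<in>set ds. snd p \<le> M"
      "x = (n / 3 + lam beta ds) * H" using atoms by blast
  have "length (cs @ ds) \<le> size (add_mset x S)" using h d by simp
  moreover have "\<forall>p\<in>set (cs @ ds). snd p \<le> M" using h d by auto
  moreover have "sum_mset (add_mset x S) = (real_of_int (N + n) / 3 + lam beta (cs @ ds)) * H"
    using h d by (simp add: lam_append algebra_simps add_divide_distrib)
  ultimately show ?case by blast
qed

theorem lemma2p5:
  fixes m K :: nat and b :: "nat \<Rightarrow> nat" and T :: atree
  assumes "m > 0" and "K > 0"
    and "\<forall>i\<in>{1..3*m}. b i > 0"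
    and "\<forall>i\<in>{1..3*m}. real K / 4 < real (b i) \<and> real (b i) < real K / 2"
    and "(\<Sum>i\<in>{1..3*m}. b i) = m * K"
  defines "W \<equiv> 100 * (5 * real m)^2 * real K"
  defines "a \<equiv> (\<lambda>i. real (b i) + W)"
  defines "L \<equiv> 3 * W + real K"
  defines "eps \<equiv> 1 / (400 * (5 * real m)^2)"
  defines "h \<equiv> real_of_int \<lfloor>4 * eps * L\<rfloor>"
  defines "H \<equiv> L + h"
  defines "beta \<equiv> (\<lambda>i. if i = 0 then h / H else a i / H - 1 / 3)"
  defines "X \<equiv> image_mset a (mset_set {1..3*m}) + replicate_mset m (- H) + replicate_mset m h"
  assumes "min_cost_tree X T"
  shows "\<forall>l r. Node l r \<in> subtrees T \<longrightarrow>
           (is_type0 m beta H (tval l) \<longleftrightarrow> is_type0 m beta H (tval r))"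
proof -
  have m1: "real m \<ge> 1" using assms(1) by simp
  have K1: "real K \<ge> 1" using assms(2) by simp
  define B where "B = 1 / (2000 * (real m)^2)"
  have msq: "(real m)^2 \<ge> 1" using m1 by (simp add: one_le_power)
  have W: "W = 2500 * (real m)^2 * real K" unfolding W_def by (simp add: power_mult_distrib)
  have L: "L = 7500 * (real m)^2 * real K + real K" unfolding L_def W by simp
  have Lpos: "L > 0" using L K1 msq by (smt (verit) mult_nonneg_nonneg of_nat_0_le_iff zero_le_power2)
  have KL: "real K * (7500 * (real m)^2) \<le> L" using L by (simp add: algebra_simps)
  have e4: "4 * eps = 1 / (2500 * (real m)^2)" unfolding eps_def by (simp add: power_mult_distrib)
  have h0: "h \<ge> 0" unfolding h_def using Lpos by (simp add: eps_def)
  have hle: "h \<le> 4 * eps * L" unfolding h_def by simp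
  have Hpos: "H > 0" and LH: "L \<le> H" unfolding H_def using Lpos h0 by auto
  have hL: "h \<le> L / (2500 * (real m)^2)" using hle e4 by simp
  have bnd: "\<bar>beta i\<bar> \<le> B" if "i \<le> 3 * m" for i
  proof (cases "i = 0")
    case True
    have "h / H \<le> h / L" using h0 Lpos LH by (simp add: divide_left_mono)
    also have "\<dots> \<le> 1 / (2500 * (real m)^2)" using hL Lpos by (simp add: divide_simps mult.commute)
    also have "\<dots> \<le> B" unfolding B_def using msq by (simp add: divide_simps)
    finally show ?thesis using True h0 Hpos by (simp add: beta_def)
  next
    case False
    then have i: "i \<in> {1..3*m}" using that by simp
    have bi: "real K / 4 < real (b i)" "real (b i) < real K / 2" using assms(4) i by auto
    have eq: "beta i = (3 * real (b i) - real K - h) / (3 * H)"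
      using False Hpos unfolding beta_def a_def H_def L_def by (simp add: field_simps)
    have num: "\<bar>3 * real (b i) - real K - h\<bar> \<le> real K + h" using bi h0 by linarith
    have "\<bar>beta i\<bar> = \<bar>3 * real (b i) - real K - h\<bar> / (3 * H)" unfolding eq
      using Hpos by (simp add: abs_divide)
    also have "\<dots> \<le> (real K + h) / (3 * H)"
      by (rule divide_right_mono[OF num]) (use Hpos in linarith)
    also have "\<dots> \<le> (real K + h) / (3 * L)" using Lpos LH h0 K1
      by (intro divide_left_mono mult_pos_pos) linarith+
    also have "\<dots> \<le> (L / (7500 * (real m)^2) + L / (2500 * (real m)^2)) / (3 * L)"
    proof -
      have "real K \<le> L / (7500 * (real m)^2)" using KL msq assms(1) by (simp add: divide_simps)
      then show ?thesis using hL Lpos by (intro divide_right_mono) auto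
    qed
    also have "\<dots> = 1 / (5625 * (real m)^2)" using Lpos msq by (simp add: field_simps)
    also have "\<dots> \<le> B" unfolding B_def using msq by (simp add: divide_simps)
    finally show ?thesis .
  qed
  have Bpos: "B \<ge> 0" unfolding B_def by simp
  have delta: "5 * real m * B = 1 / (400 * real m)" unfolding B_def using m1
    by (simp add: field_simps power2_eq_square)
  have lamb: "\<bar>lam beta cs\<bar> \<le> 1 / (400 * real m)"
    if "length cs \<le> 5 * m" "\<forall>p\<in>set cs. snd p \<le> 3 * m" for cs
  proof -
    have "\<bar>lam beta cs\<bar> \<le> length cs * B" by (rule lam_bound) (use that bnd in auto)
    also have "\<dots> \<le> (5 * real m) * B" using that(1) Bpos
      by (intro mult_right_mono) auto
    finally show ?thesis using delta by simp
  qed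
  have atoms: "\<forall>x\<in>#X. \<exists>n::int. \<exists>cs. length cs \<le> 1 \<and> (\<forall>p\<in>set cs. snd p \<le> 3 * m) \<and>
                        x = (n / 3 + lam beta cs) * H"
  proof
    fix x assume "x \<in># X"
    then consider (A) i where "i \<in> {1..3*m}" "x = a i" | (B) "x = - H" | (C) "x = h"
      unfolding X_def by (auto split: if_splits)
    then show "\<exists>n::int. \<exists>cs. length cs \<le> 1 \<and> (\<forall>p\<in>set cs. snd p \<le> 3 * m) \<and>
                        x = (n / 3 + lam beta cs) * H"
    proof cases
      case (A i)
      have "x = (real_of_int 1 / 3 + lam beta [(True, i)]) * H"
        using A Hpos by (auto simp: lam_def beta_def field_simps)
      then show ?thesis using A(1) by (intro exI[of _ 1] exI[of _ "[(True, i)]"]) auto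
    next
      case B
      have "x = (real_of_int (-3) / 3 + lam beta []) * H" using B by (simp add: lam_def)
      then show ?thesis by (intro exI[of _ "-3"] exI[of _ "[]"]) auto
    next
      case C
      have "x = (real_of_int 0 / 3 + lam beta [(True, 0)]) * H"
        using C Hpos by (simp add: lam_def beta_def)
      then show ?thesis by (intro exI[of _ 0] exI[of _ "[(True, 0)]"]) auto
    qed
  qed
  have sizeX: "size X = 5 * m" unfolding X_def by simp
  have sumb: "(\<Sum>i\<in>{1..3*m}. real (b i)) = real m * real K"
  proof -
    have "(\<Sum>i\<in>{1..3*m}. real (b i)) = real (\<Sum>i\<in>{1..3*m}. b i)"
      by (rule of_nat_sum[symmetric])
    also have "\<dots> = real m * real K" by (simp only: assms(5) of_nat_mult)
    finally show ?thesis .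
  qed
  have sumX: "sum_mset X = 0"
  proof -
    have "sum_mset X = (\<Sum>i\<in>{1..3*m}. a i) - real m * H + real m * h"
      unfolding X_def by (simp add: sum_unfold_sum_mset[symmetric])
    also have "(\<Sum>i\<in>{1..3*m}. a i) = real m * real K + real (card {1..3*m}) * W"
      unfolding a_def sum.distrib sumb by simp
    also have "\<dots> - real m * H + real m * h = 0" unfolding H_def L_def
      by (simp add: algebra_simps)
    finally show ?thesis .
  qed
  have lT: "leaves T = X" and minT: "\<And>T'. leaves T' = X \<Longrightarrow> cost T \<le> cost T'"
    using assms(14) unfolding min_cost_tree_def by auto
  have inT: "real (inodes T) = 5 * real m - 1"
    using size_leaves[of T] lT sizeX by simp
  have tvT: "tval T = 0" using tval_sum lT sumX by simp
  have key: False if sub: "Node p q \<in> subtrees T \<or> Node q p \<in> subtrees T"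
      and t0: "is_type0 m beta H (tval p)" and nt0: "\<not> is_type0 m beta H (tval q)" for p q
  proof -
    obtain cs where cs: "length cs \<le> 5 * m" "\<forall>p\<in>set cs. snd p \<le> 3 * m"
      "tval p = lam beta cs * H" using t0 unfolding is_type0_def lam_def by blast
    have vp: "\<bar>tval p\<bar> \<le> H / (400 * real m)"
      using lamb[OF cs(1,2)] Hpos cs(3) assms(1) by (simp add: abs_mult divide_simps mult.commute)
    have "leaves q \<subseteq># X"
      using sub
    proof
      assume "Node p q \<in> subtrees T"
      then have "leaves (Node p q) \<subseteq># X" using sub_leaves lT by metis
      then show ?thesis using subset_mset.order_trans[OF mset_subset_eq_add_right] by simp
    next
      assume "Node q p \<in> subtrees T"
      then have "leaves (Node q p) \<subseteq># X" using sub_leaves lT by metis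
      then show ?thesis using subset_mset.order_trans[OF mset_subset_eq_add_left] by simp
    qed
    then obtain N :: int and ds where ds: "length ds \<le> size (leaves q)"
      "\<forall>p\<in>set ds. snd p \<le> 3 * m" "sum_mset (leaves q) = (N / 3 + lam beta ds) * H"
      using repr[OF atoms] by blast
    have dl: "length ds \<le> 5 * m" using ds(1) \<open>leaves q \<subseteq># X\<close> sizeX
      by (metis dual_order.trans size_mset_mono)
    have vq: "tval q = (N / 3 + lam beta ds) * H" using ds(3) tval_sum by simp
    have "N \<noteq> 0"
    proof
      assume "N = 0"
      then have "tval q = lam beta ds * H" using vq by simp
      then show False using nt0 dl ds(2) unfolding is_type0_def lam_def by blast
    qed
    then have N1: "\<bar>real_of_int N / 3\<bar> \<ge> 1 / 3" by linarith
    have lq: "\<bar>lam beta ds\<bar> \<le> 1 / (400 * real m)" using lamb[OF dl ds(2)] .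
    have "\<bar>N / 3 + lam beta ds\<bar> \<ge> 1/3 - 1 / (400 * real m)" using N1 lq by linarith
    then have vq2: "\<bar>tval q\<bar> \<ge> (1/3 - 1 / (400 * real m)) * H"
      using vq Hpos by (simp add: abs_mult mult_right_mono)
    obtain T' where T': "leaves T' + leaves p = leaves T" "tval T' + tval p = tval T"
        "cost T' + cost p \<le> cost T - \<bar>tval p + tval q\<bar> + \<bar>tval p\<bar> * inodes T"
      using surgery[OF sub] by blast
    have "leaves (Node T' p) = X" using T'(1) lT by simp
    then have "cost T \<le> cost (Node T' p)" by (rule minT)
    also have "\<dots> = cost T' + cost p" using T'(2) tvT by simp
    finally have ineq: "\<bar>tval p + tval q\<bar> \<le> \<bar>tval p\<bar> * (5 * real m - 1)"
      using T'(3) inT by simp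
    have "\<bar>tval p\<bar> * (5 * real m - 1) \<le> H / (400 * real m) * (5 * real m - 1)"
      using vp m1 by (intro mult_right_mono) auto
    moreover have "\<bar>tval p + tval q\<bar> \<ge> (1/3 - 1 / (400 * real m)) * H - H / (400 * real m)"
      using vp vq2 by linarith
    ultimately have "(1/3 - 1 / (400 * real m)) * H - H / (400 * real m)
        \<le> H / (400 * real m) * (5 * real m - 1)" using ineq by linarith
    then have "(1/3 - 2 * (1 / (400 * real m))) * H
        \<le> (1 / (400 * real m) * (5 * real m - 1)) * H"
      by (simp add: algebra_simps)
    then have "1/3 - 2 * (1 / (400 * real m)) \<le> 1 / (400 * real m) * (5 * real m - 1)"
      using Hpos by (simp only: mult_le_cancel_right_pos)
    then have "1/3 \<le> (5 * real m + 1) / (400 * real m)"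
      using m1 by (simp add: field_simps)
    then have "400 * real m \<le> 3 * (5 * real m + 1)" using m1
      by (simp add: field_simps)
    then show False using m1 by (simp add: algebra_simps)
  qed
  show ?thesis
  proof (intro allI impI)
    fix l r assume "Node l r \<in> subtrees T"
    then show "is_type0 m beta H (tval l) \<longleftrightarrow> is_type0 m beta H (tval r)"
      using key[of l r] key[of r l] by blast
  qed
qed

end
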